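(* Let $m,n$ be positive integers. The simplicial rook graph $\mathcal{SR}(m,n)$ is Hamiltonian, except in the cases $m=1$ and $(m,n)=(2,1)$.
   Context: For positive integers $m,n$, the simplicial rook graph $\mathcal{SR}(m,n)$ is the graph whose vertices are the vectors $(a_1,\dots,a_m)\in\mathbb{N}^m$ (nonnegative integer coordinates) with $a_1+\cdots+a_m=n$, two vertices being adjacent if and only if their vectors differ in exactly two coordinates. A graph is Hamiltonian if it has a cycle passing through every vertex exactly once. *)

theory Defs
  imports Main
begin

definition hamiltonian :: "'a set \<Rightarrow> ('a \<Rightarrow> 'a \<Rightarrow> bool) \<Rightarrow> bool" where
  "hamiltonian V E \<longleftrightarrow>
     (\<exists>cs. length cs \<ge> 3 \<and> distinct cs \<and> set cs = V \<and>
        (\<forall>i < length cs. E (cs ! i) (cs ! ((i + 1) mod length cs))))"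

definition SR_vertices :: "nat \<Rightarrow> nat \<Rightarrow> nat list set" where
  "SR_vertices m n = {a. length a = m \<and> sum_list a = n}"

definition SR_adj :: "nat list \<Rightarrow> nat list \<Rightarrow> bool" where
  "SR_adj a b \<longleftrightarrow> card {i. i < length a \<and> a ! i \<noteq> b ! i} = 2"

end

theory Submission
  imports Defs
begin

definition lay :: "nat list list \<Rightarrow> nat \<Rightarrow> nat list list" where
  "lay xs k = map (\<lambda>x. x @ [k]) (if even k then xs else rev xs)"

fun P :: "nat \<Rightarrow> nat \<Rightarrow> nat list list" where
  "P 0 n = [[n]]"
| "P (Suc m) n = concat (map (\<lambda>k. lay (P m (n - k)) k) [0..<Suc n])"

lemma last_concat_upt:
  assumes "f n \<noteq> []"
  shows "last (concat (map f [0..<Suc n])) = last (f n)"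
  using assms by simp

lemma hd_concat_upt:
  assumes "f 0 \<noteq> []"
  shows "hd (concat (map f [0..<Suc n])) = hd (f 0)"
proof -
  have "[0..<Suc n] = 0 # [1..<Suc n]" by (simp add: upt_conv_Cons)
  then show ?thesis using assms by simp
qed

lemma succ_concat:
  assumes "\<And>k. k \<le> n \<Longrightarrow> successively R (f k)"
    and "\<And>k. k \<le> n \<Longrightarrow> f k \<noteq> []"
    and "\<And>k. k < n \<Longrightarrow> R (last (f k)) (hd (f (Suc k)))"
  shows "successively R (concat (map f [0..<Suc n]))"
  using assms
proof (induction n)
  case 0
  then show ?case by simp
next
  case (Suc n)
  have IH: "successively R (concat (map f [0..<Suc n]))"
    using Suc.IH Suc.prems by auto
  have ne: "concat (map f [0..<Suc n]) \<noteq> []" using Suc.prems(2)[of n] by simp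
  have "concat (map f [0..<Suc (Suc n)]) = concat (map f [0..<Suc n]) @ f (Suc n)"
    by simp
  moreover have "last (concat (map f [0..<Suc n])) = last (f n)"
    using Suc.prems(2)[of n] by simp
  ultimately show ?case using IH Suc.prems
    by (simp add: successively_append_iff)
qed

lemma dist_concat:
  assumes "\<And>k. k \<le> n \<Longrightarrow> distinct (f k)"
    and "\<And>k j. k \<le> n \<Longrightarrow> j \<le> n \<Longrightarrow> k \<noteq> j \<Longrightarrow> set (f k) \<inter> set (f j) = {}"
  shows "distinct (concat (map f [0..<Suc n]))"
  using assms
proof (induction n)
  case 0
  then show ?case by simp
next
  case (Suc n)
  have IH: "distinct (concat (map f [0..<Suc n]))"
    using Suc.IH Suc.prems by auto
  have "set (concat (map f [0..<Suc n])) \<inter> set (f (Suc n)) = {}"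
  proof -
    { fix x k assume "k < Suc n" "x \<in> set (f k)" "x \<in> set (f (Suc n))"
      then have False using Suc.prems(2)[of k "Suc n"] by auto }
    then show ?thesis by (force simp del: upt_Suc)
  qed
  moreover have eq: "concat (map f [0..<Suc (Suc n)]) = concat (map f [0..<Suc n]) @ f (Suc n)"
    by simp
  ultimately show ?case using IH Suc.prems(1)[of "Suc n"] by (simp only: eq distinct_append)
qed

lemma SR_adj_sym: "length a = length b \<Longrightarrow> SR_adj a b \<Longrightarrow> SR_adj b a"
proof -
  assume "length a = length b" "SR_adj a b"
  moreover have "{i. i < length b \<and> b ! i \<noteq> a ! i} = {i. i < length a \<and> a ! i \<noteq> b ! i}"
    using \<open>length a = length b\<close> by auto
  ultimately show ?thesis unfolding SR_adj_def by simp
qed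

lemma SR_adj_app: "length x = length y \<Longrightarrow> SR_adj (x @ [k]) (y @ [k]) = SR_adj x y"
proof -
  assume l: "length x = length y"
  have "{i. i < length (x @ [k]) \<and> (x @ [k]) ! i \<noteq> (y @ [k]) ! i} = {i. i < length x \<and> x ! i \<noteq> y ! i}"
    using l by (auto simp: nth_append less_Suc_eq)
  then show ?thesis unfolding SR_adj_def by simp
qed

lemma card2: "a \<noteq> b \<Longrightarrow> S = {a, b} \<Longrightarrow> card S = 2" by simp

lemma T1: "s \<ge> 1 \<Longrightarrow> SR_adj ((s # replicate m 0) @ [k]) (((s - 1) # replicate m 0) @ [Suc k])"
  unfolding SR_adj_def
proof (rule card2[of 0 "Suc m"], simp, rule set_eqI, rule iffI)
  fix i assume s: "s \<ge> 1" and i: "i \<in> {i. i < length ((s # replicate m 0) @ [k]) \<and>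
      ((s # replicate m 0) @ [k]) ! i \<noteq> (((s - 1) # replicate m 0) @ [Suc k]) ! i}"
  show "i \<in> {0, Suc m}"
  proof (rule ccontr)
    assume "i \<notin> {0, Suc m}"
    then obtain j where j: "i = Suc j" "j < m" using i by (cases i) auto
    then show False using i by (simp add: nth_append)
  qed
next
  fix i assume s: "s \<ge> 1" and "i \<in> {0, Suc m}"
  then show "i \<in> {i. i < length ((s # replicate m 0) @ [k]) \<and>
      ((s # replicate m 0) @ [k]) ! i \<noteq> (((s - 1) # replicate m 0) @ [Suc k]) ! i}"
    by (auto simp: nth_append)
qed

lemma T2: "s \<ge> 1 \<Longrightarrow> SR_adj ((replicate m 0 @ [s]) @ [k]) ((replicate m 0 @ [s - 1]) @ [Suc k])"
  unfolding SR_adj_def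
proof (rule card2[of m "Suc m"], simp, rule set_eqI, rule iffI)
  fix i assume s: "s \<ge> 1" and i: "i \<in> {i. i < length ((replicate m 0 @ [s]) @ [k]) \<and>
      ((replicate m 0 @ [s]) @ [k]) ! i \<noteq> ((replicate m 0 @ [s - 1]) @ [Suc k]) ! i}"
  show "i \<in> {m, Suc m}"
  proof (rule ccontr)
    assume "i \<notin> {m, Suc m}"
    then have "i < m" using i by auto
    then show False using i by (simp add: nth_append)
  qed
next
  fix i assume s: "s \<ge> 1" and "i \<in> {m, Suc m}"
  then show "i \<in> {i. i < length ((replicate m 0 @ [s]) @ [k]) \<and>
      ((replicate m 0 @ [s]) @ [k]) ! i \<noteq> ((replicate m 0 @ [s - 1]) @ [Suc k]) ! i}"
    by (auto simp: nth_append)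
qed

lemma T3: "m \<ge> 1 \<Longrightarrow> n \<ge> 1 \<Longrightarrow> SR_adj (replicate m 0 @ [n]) (n # replicate m 0)"
  unfolding SR_adj_def
proof (rule card2[of 0 m], simp, rule set_eqI, rule iffI)
  fix i assume m: "m \<ge> 1" "n \<ge> 1" and i: "i \<in> {i. i < length (replicate m 0 @ [n]) \<and>
      (replicate m 0 @ [n]) ! i \<noteq> (n # replicate m 0) ! i}"
  show "i \<in> {0, m}"
  proof (rule ccontr)
    assume "i \<notin> {0, m}"
    then obtain j where j: "i = Suc j" "Suc j < m" using i by (cases i) auto
    then show False using i by (simp add: nth_append)
  qed
next
  fix i assume m: "m \<ge> 1" "n \<ge> 1" and "i \<in> {0, m}"
  then show "i \<in> {i. i < length (replicate m 0 @ [n]) \<and>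
      (replicate m 0 @ [n]) ! i \<noteq> (n # replicate m 0) ! i}"
  proof -
    have a: "(replicate m 0 @ [n]) ! m = n" by (simp add: nth_append)
    have b: "(n # replicate m 0) ! m = 0" using m by (simp add: nth_Cons')
    have c: "(replicate m 0 @ [n]) ! 0 = 0" using m by (cases m) auto
    show ?thesis using a b c m \<open>i \<in> {0, m}\<close> by auto
  qed
qed

lemma lay_succ:
  assumes "successively SR_adj xs" "\<forall>x\<in>set xs. length x = l"
  shows "successively SR_adj (lay xs k)"
proof (cases "even k")
  case True
  have "successively (\<lambda>x y. SR_adj (x @ [k]) (y @ [k])) xs"
    using assms by (auto intro: successively_mono simp: SR_adj_app)
  then show ?thesis using True by (simp add: lay_def successively_map)
next
  case False
  have "successively (\<lambda>x y. SR_adj (y @ [k]) (x @ [k])) xs"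
    using assms by (auto intro!: successively_mono[OF assms(1)] simp: SR_adj_app SR_adj_sym)
  then show ?thesis using False by (simp add: lay_def successively_map)
qed

lemma lay_hd: "xs \<noteq> [] \<Longrightarrow> hd (lay xs k) = (if even k then hd xs else last xs) @ [k]"
  by (simp add: lay_def hd_map hd_rev)

lemma lay_last: "xs \<noteq> [] \<Longrightarrow> last (lay xs k) = (if even k then last xs else hd xs) @ [k]"
  by (simp add: lay_def last_map last_rev)

lemma lay_set: "set (lay xs k) = (\<lambda>x. x @ [k]) ` set xs"
  by (simp add: lay_def)

lemma lay_distinct: "distinct xs \<Longrightarrow> distinct (lay xs k)"
  by (auto simp: lay_def distinct_map inj_on_def)

lemma lay_ne: "xs \<noteq> [] \<Longrightarrow> lay xs k \<noteq> []"
  by (simp add: lay_def)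

lemma SR_split:
  "SR_vertices (Suc (Suc m)) n = (\<Union>k\<in>{0..<Suc n}. (\<lambda>x. x @ [k]) ` SR_vertices (Suc m) (n - k))"
proof (rule set_eqI, rule iffI)
  fix v assume v: "v \<in> SR_vertices (Suc (Suc m)) n"
  then have ne: "v \<noteq> []" by (auto simp: SR_vertices_def)
  have e: "v = butlast v @ [last v]" using ne by simp
  have "sum_list v = sum_list (butlast v) + last v" by (subst e) simp
  then have "last v \<le> n" "sum_list (butlast v) = n - last v" using v by (auto simp: SR_vertices_def)
  moreover have "length (butlast v) = Suc m" using v by (auto simp: SR_vertices_def)
  ultimately show "v \<in> (\<Union>k\<in>{0..<Suc n}. (\<lambda>x. x @ [k]) ` SR_vertices (Suc m) (n - k))"
    using e by (auto simp: SR_vertices_def intro!: bexI[of _ "last v"] image_eqI[of _ _ "butlast v"])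
next
  fix v assume "v \<in> (\<Union>k\<in>{0..<Suc n}. (\<lambda>x. x @ [k]) ` SR_vertices (Suc m) (n - k))"
  then show "v \<in> SR_vertices (Suc (Suc m)) n" by (auto simp: SR_vertices_def)
qed

lemma P_props:
  "set (P m n) = SR_vertices (Suc m) n \<and> distinct (P m n) \<and> P m n \<noteq> [] \<and>
   hd (P m n) = n # replicate m 0 \<and> last (P m n) = replicate m 0 @ [n] \<and>
   successively SR_adj (P m n)"
proof (induction m arbitrary: n)
  case 0
  then show ?case by (auto simp: SR_vertices_def length_Suc_conv)
next
  case (Suc m)
  define f where "f = (\<lambda>k. lay (P m (n - k)) k)"
  have Pe: "P (Suc m) n = concat (map f [0..<Suc n])" by (simp add: f_def)
  have ne: "f k \<noteq> []" for k using Suc.IH[of "n - k"] by (simp add: f_def lay_ne)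
  have len: "\<forall>x\<in>set (P m j). length x = Suc m" for j
    using Suc.IH[of j] by (simp add: SR_vertices_def)
  have succ: "successively SR_adj (f k)" for k
    unfolding f_def using Suc.IH[of "n - k"] len by (blast intro: lay_succ)
  have trans: "SR_adj (last (f k)) (hd (f (Suc k)))" if "k < n" for k
  proof (cases "even k")
    case True
    have "last (f k) = (replicate m 0 @ [n - k]) @ [k]"
      using True Suc.IH[of "n - k"] by (simp add: f_def lay_last)
    moreover have "hd (f (Suc k)) = (replicate m 0 @ [n - k - 1]) @ [Suc k]"
      using True Suc.IH[of "n - Suc k"] by (simp add: f_def lay_hd)
    ultimately show ?thesis using T2[of "n - k" m k] that by simp
  next
    case False
    have "last (f k) = ((n - k) # replicate m 0) @ [k]"
      using False Suc.IH[of "n - k"] by (simp add: f_def lay_last)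
    moreover have "hd (f (Suc k)) = ((n - k - 1) # replicate m 0) @ [Suc k]"
      using False Suc.IH[of "n - Suc k"] by (simp add: f_def lay_hd)
    ultimately show ?thesis using T1[of "n - k" m k] that by simp
  qed
  have sf: "set (f k) = (\<lambda>x. x @ [k]) ` SR_vertices (Suc m) (n - k)" for k
    using Suc.IH[of "n - k"] by (simp add: f_def lay_set)
  have "set (P (Suc m) n) = SR_vertices (Suc (Suc m)) n"
    unfolding Pe SR_split by (simp add: sf del: upt_Suc)
  moreover have "distinct (P (Suc m) n)"
    unfolding Pe
  proof (rule dist_concat)
    show "distinct (f k)" for k using Suc.IH[of "n - k"] by (simp add: f_def lay_distinct)
    show "set (f k) \<inter> set (f j) = {}" if "k \<noteq> j" for k j
      using that by (auto simp: sf)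
  qed
  moreover have "P (Suc m) n \<noteq> []" unfolding Pe using ne[of n] by simp
  moreover have "hd (P (Suc m) n) = n # replicate (Suc m) 0"
    unfolding Pe hd_concat_upt[of f, OF ne[of 0]] using Suc.IH[of n]
    by (simp add: f_def lay_hd replicate_append_same)
  moreover have "last (P (Suc m) n) = replicate (Suc m) 0 @ [n]"
    unfolding Pe using Suc.IH[of 0] ne[of n]
    by (simp add: f_def lay_last replicate_append_same)
  moreover have "successively SR_adj (P (Suc m) n)"
    unfolding Pe by (rule succ_concat) (use succ ne trans in auto)
  ultimately show ?case by blast
qed

lemma ham_len:
  assumes "hamiltonian V E" "finite V" "card V < 3"
  shows False
proof -
  obtain cs where "length cs \<ge> 3" "distinct cs" "set cs = V"
    using assms(1) unfolding hamiltonian_def by blast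
  then show False using assms distinct_card[of cs] by simp
qed

lemma SR1: "SR_vertices 1 n = {[n]}"
  by (auto simp: SR_vertices_def length_Suc_conv)

lemma SR21: "SR_vertices 2 1 = {[1,0],[0,1]}"
proof -
  have "v = [1,0] \<or> v = [0,1]" if "length v = 2" "sum_list v = 1" for v :: "nat list"
  proof -
    have "length v = Suc (Suc 0)" using that(1) by simp
    then obtain a b where "v = [a, b]" by (auto simp: length_Suc_conv)
    then show ?thesis using that(2) by auto
  qed
  then show ?thesis by (auto simp: SR_vertices_def)
qed

lemma ham_pos:
  assumes "m = Suc (Suc j)" "n \<ge> 1" "\<not> (m = 2 \<and> n = 1)"
  shows "hamiltonian (SR_vertices m n) SR_adj"
proof -
  define cs where "cs = P (Suc j) n"
  note pp = P_props[of "Suc j" n, folded cs_def]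
  have three: "\<exists>a b c. a \<in> set cs \<and> b \<in> set cs \<and> c \<in> set cs \<and> a \<noteq> b \<and> a \<noteq> c \<and> b \<noteq> c"
  proof (cases j)
    case 0
    then have "n \<ge> 2" using assms by auto
    then show ?thesis using pp 0
      by (intro exI[of _ "[n,0]"] exI[of _ "[0,n]"] exI[of _ "[1,n-1]"]) (auto simp: SR_vertices_def)
  next
    case (Suc i)
    then show ?thesis using pp assms
      by (intro exI[of _ "n # replicate (Suc j) 0"] exI[of _ "replicate (Suc j) 0 @ [n]"]
          exI[of _ "0 # n # replicate j 0"]) (auto simp: SR_vertices_def)
  qed
  have "length cs \<ge> 3"
  proof -
    obtain a b c where abc: "a \<in> set cs" "b \<in> set cs" "c \<in> set cs" "a \<noteq> b" "a \<noteq> c" "b \<noteq> c"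
      using three by blast
    have "card {a, b, c} \<le> card (set cs)" using abc by (intro card_mono) auto
    also have "\<dots> = length cs" using pp distinct_card by blast
    finally show ?thesis using abc by simp
  qed
  moreover have "\<forall>i < length cs. SR_adj (cs ! i) (cs ! ((i + 1) mod length cs))"
  proof (intro allI impI)
    fix i assume i: "i < length cs"
    show "SR_adj (cs ! i) (cs ! ((i + 1) mod length cs))"
    proof (cases "Suc i < length cs")
      case True
      then show ?thesis using pp successively_nth[of SR_adj cs i] by simp
    next
      case False
      then have ii: "i = length cs - 1" using i by simp
      have "i + 1 = length cs" using i False by simp
      then have "(i + 1) mod length cs = 0" by simp
      moreover have "cs ! i = last cs" using ii pp by (metis last_conv_nth)
      moreover have "cs ! 0 = hd cs" using pp by (metis hd_conv_nth)
      ultimately show ?thesis using pp T3[of "Suc j" n] assms by simp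
    qed
  qed
  ultimately show ?thesis unfolding hamiltonian_def using pp assms by blast
qed

theorem theorem3:
  fixes m n :: nat
  assumes "m \<ge> 1" and "n \<ge> 1"
  shows "hamiltonian (SR_vertices m n) SR_adj \<longleftrightarrow> \<not> (m = 1 \<or> (m = 2 \<and> n = 1))"
proof
  assume h: "hamiltonian (SR_vertices m n) SR_adj"
  show "\<not> (m = 1 \<or> (m = 2 \<and> n = 1))"
  proof
    assume "m = 1 \<or> (m = 2 \<and> n = 1)"
    then show False
    proof
      assume "m = 1" then show False using h ham_len SR1 by fastforce
    next
      assume "m = 2 \<and> n = 1" then show False using h ham_len SR21 by fastforce
    qed
  qed
next
  assume "\<not> (m = 1 \<or> (m = 2 \<and> n = 1))"
  then obtain j where "m = Suc (Suc j)" "\<not> (m = 2 \<and> n = 1)" using assms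
    by (metis One_nat_def Suc_le_D not0_implies_Suc)
  then show "hamiltonian (SR_vertices m n) SR_adj" using ham_pos assms by blast
qed

end
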